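(* Let $G$ and $H$ be finite connected graphs such that $H$ fractionally tiles $G$. Then for all $t>0$, $$\frac{1}{|G|}\sum_{x\in V(G)}p_t(x;G)\le \frac{1}{|H|}\sum_{x\in V(H)}p_t(x;H),$$ with equality if and only if $G=H$.
   Context: For a graph $K$, its Laplacian $\Delta_K$ is the matrix indexed by $V(K)$ whose off-diagonal entry $\Delta_K(x,y)$ is minus the number of edges joining $x$ and $y$ and whose row sums vanish. For continuous-time simple random walk on $K$, $p_t(x;K)$ is the probability that the walk started at $x$ is at $x$ at time $t$, i.e., the $(x,x)$-entry of $e^{-t\Delta_K}$. $|K|$ is the number of vertices. A copy of $H$ in $G$ is a subgraph isomorphic to $H$; $H$ fractionally tiles $G$ means there is a finite list of copies of $H$ in $G$ such that every vertex of $G$ is covered the same number of times. *)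

theory Defs
  imports Complex_Main
begin

text \<open>A finite loopless multigraph: vertex set V and a symmetric edge-multiplicity
  function m (m x y = number of edges joining x and y), supported on V.\<close>
definition mgraph :: "'a set \<Rightarrow> ('a \<Rightarrow> 'a \<Rightarrow> nat) \<Rightarrow> bool" where
  "mgraph V m \<longleftrightarrow> finite V \<and> V \<noteq> {} \<and> (\<forall>x y. m x y = m y x) \<and> (\<forall>x. m x x = 0)
     \<and> (\<forall>x y. 0 < m x y \<longrightarrow> x \<in> V \<and> y \<in> V)"

definition connected_mg :: "'a set \<Rightarrow> ('a \<Rightarrow> 'a \<Rightarrow> nat) \<Rightarrow> bool" where
  "connected_mg V m \<longleftrightarrow> (\<forall>x\<in>V. \<forall>y\<in>V. (\<lambda>u v. 0 < m u v)\<^sup>*\<^sup>* x y)"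

definition laplacian :: "'a set \<Rightarrow> ('a \<Rightarrow> 'a \<Rightarrow> nat) \<Rightarrow> 'a \<Rightarrow> 'a \<Rightarrow> real" where
  "laplacian V m x y = (if x = y then (\<Sum>z\<in>V. real (m x z)) else - real (m x y))"

fun matpow :: "'a set \<Rightarrow> ('a \<Rightarrow> 'a \<Rightarrow> real) \<Rightarrow> nat \<Rightarrow> 'a \<Rightarrow> 'a \<Rightarrow> real" where
  "matpow V A 0 = (\<lambda>x y. if x = y then 1 else 0)"
| "matpow V A (Suc k) = (\<lambda>x y. \<Sum>z\<in>V. matpow V A k x z * A z y)"

text \<open>Return probability p_t(x;K) = (x,x)-entry of exp(-t Laplacian), via the exponential series.\<close>
definition heat_kernel :: "'a set \<Rightarrow> ('a \<Rightarrow> 'a \<Rightarrow> nat) \<Rightarrow> real \<Rightarrow> 'a \<Rightarrow> real" where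
  "heat_kernel V m t x = (\<Sum>k. (- t) ^ k / fact k * matpow V (laplacian V m) k x x)"

definition mg_iso :: "'b set \<Rightarrow> ('b \<Rightarrow> 'b \<Rightarrow> nat) \<Rightarrow> 'a set \<Rightarrow> ('a \<Rightarrow> 'a \<Rightarrow> nat) \<Rightarrow> bool" where
  "mg_iso VH mH VG mG \<longleftrightarrow> (\<exists>\<phi>. bij_betw \<phi> VH VG \<and>
       (\<forall>x\<in>VH. \<forall>y\<in>VH. mG (\<phi> x) (\<phi> y) = mH x y))"

definition is_copy :: "'b set \<Rightarrow> ('b \<Rightarrow> 'b \<Rightarrow> nat) \<Rightarrow> 'a set \<Rightarrow> ('a \<Rightarrow> 'a \<Rightarrow> nat)
    \<Rightarrow> 'a set \<times> ('a \<Rightarrow> 'a \<Rightarrow> nat) \<Rightarrow> bool" where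
  "is_copy VH mH VG mG C \<longleftrightarrow> (case C of (W, e) \<Rightarrow>
      W \<subseteq> VG \<and> (\<forall>x y. e x y \<le> mG x y) \<and> (\<forall>x y. 0 < e x y \<longrightarrow> x \<in> W \<and> y \<in> W)
      \<and> mg_iso VH mH W e)"

definition frac_tiles :: "'b set \<Rightarrow> ('b \<Rightarrow> 'b \<Rightarrow> nat) \<Rightarrow> 'a set \<Rightarrow> ('a \<Rightarrow> 'a \<Rightarrow> nat) \<Rightarrow> bool" where
  "frac_tiles VH mH VG mG \<longleftrightarrow> (\<exists>cs c. (\<forall>C\<in>set cs. is_copy VH mH VG mG C) \<and> 0 < c \<and>
      (\<forall>v\<in>VG. length (filter (\<lambda>C. v \<in> fst C) cs) = c))"

end

theory Submission
  imports Defs "HOL-Analysis.Analysis"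
begin



definition ip :: "'a set \<Rightarrow> ('a \<Rightarrow> real) \<Rightarrow> ('a \<Rightarrow> real) \<Rightarrow> real" where
  "ip V f g = (\<Sum>x\<in>V. f x * g x)"

definition mv :: "'a set \<Rightarrow> ('a \<Rightarrow> 'a \<Rightarrow> real) \<Rightarrow> ('a \<Rightarrow> real) \<Rightarrow> 'a \<Rightarrow> real" where
  "mv V A f = (\<lambda>x. \<Sum>y\<in>V. A x y * f y)"

lemma compact_box:
  "compact (PiE UNIV (\<lambda>x. if x \<in> V then {-1..1::real} else {0}))"
proof -
  have "compactin (product_topology (\<lambda>i. euclidean) UNIV) (PiE UNIV (\<lambda>x. if x \<in> V then {-1..1::real} else {0}))"
    by (subst compactin_PiE) auto
  then show ?thesis by (simp add: euclidean_product_topology)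
qed

lemma cont_ip: "continuous_on UNIV (\<lambda>f::'a\<Rightarrow>real. ip V f (g f))" if "continuous_on UNIV g"
proof -
  have "continuous_on UNIV (\<lambda>f::'a\<Rightarrow>real. f x * g f x)" for x
    by (rule continuous_on_mult[OF continuous_on_product_coordinates continuous_on_product_then_coordinatewise[OF that]])
  then show ?thesis unfolding ip_def by (rule continuous_on_sum)
qed

lemma cont_mv: "continuous_on UNIV (\<lambda>f::'a\<Rightarrow>real. mv V A f)"
proof -
  have "continuous_on UNIV (\<lambda>f::'a\<Rightarrow>real. A x y * f y)" for x y
    by (rule continuous_on_mult[OF continuous_on_const continuous_on_product_coordinates])
  then have "continuous_on UNIV (\<lambda>f::'a\<Rightarrow>real. mv V A f x)" for x
    unfolding mv_def by (intro continuous_on_sum)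
  then show ?thesis by (rule continuous_on_coordinatewise_then_product)
qed




definition qf :: "'a set \<Rightarrow> ('a \<Rightarrow> 'a \<Rightarrow> real) \<Rightarrow> ('a \<Rightarrow> real) \<Rightarrow> ('a \<Rightarrow> real) \<Rightarrow> real" where
  "qf V A f g = (\<Sum>x\<in>V. \<Sum>y\<in>V. f x * A x y * g y)"

definition orthon :: "'a set \<Rightarrow> (nat \<Rightarrow> 'a \<Rightarrow> real) \<Rightarrow> nat \<Rightarrow> bool" where
  "orthon V u k \<longleftrightarrow> (\<forall>i<k. \<forall>j<k. ip V (u i) (u j) = (if i = j then 1 else 0))"

definition eig :: "'a set \<Rightarrow> ('a \<Rightarrow> 'a \<Rightarrow> real) \<Rightarrow> (nat \<Rightarrow> 'a \<Rightarrow> real) \<Rightarrow> (nat \<Rightarrow> real) \<Rightarrow> nat \<Rightarrow> bool" where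
  "eig V A u lam k \<longleftrightarrow> (\<forall>i<k. \<forall>x\<in>V. mv V A (u i) x = lam i * u i x)"

lemma ip_comm: "ip V f g = ip V g f"
  unfolding ip_def by (simp add: mult.commute)

lemma ip_diff_left: "ip V (\<lambda>x. f x - g x) h = ip V f h - ip V g h"
  unfolding ip_def by (simp add: left_diff_distrib sum_subtractf)

lemma ip_add_left: "ip V (\<lambda>x. f x + g x) h = ip V f h + ip V g h"
  unfolding ip_def by (simp add: distrib_right sum.distrib)

lemma ip_scale_left: "ip V (\<lambda>x. c * f x) h = c * ip V f h"
  unfolding ip_def by (simp add: sum_distrib_left mult.assoc)

lemma ip_sum_left: "ip V (\<lambda>x. \<Sum>i\<in>I. c i * g i x) h = (\<Sum>i\<in>I. c i * ip V (g i) h)"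
  unfolding ip_def by (simp add: sum_distrib_right sum_distrib_left mult.assoc sum.swap[of _ V])

lemma ip_diff_right: "ip V h (\<lambda>x. f x - g x) = ip V h f - ip V h g"
  unfolding ip_def by (simp add: right_diff_distrib sum_subtractf)

lemma ip_sum_right: "ip V h (\<lambda>x. \<Sum>i\<in>I. c i * g i x) = (\<Sum>i\<in>I. c i * ip V h (g i))"
  unfolding ip_def by (simp add: sum_distrib_right sum_distrib_left mult.left_commute sum.swap[of _ V])

lemma ip_cong: "(\<And>x. x \<in> V \<Longrightarrow> f x = f' x) \<Longrightarrow> (\<And>x. x \<in> V \<Longrightarrow> g x = g' x) \<Longrightarrow> ip V f g = ip V f' g'"
  unfolding ip_def by (rule sum.cong) auto

lemma ip_self_nonneg: "0 \<le> ip V f f"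
  unfolding ip_def by (intro sum_nonneg) auto

lemma ip_self_zero: "finite V \<Longrightarrow> ip V f f = 0 \<Longrightarrow> x \<in> V \<Longrightarrow> f x = 0"
  unfolding ip_def using sum_nonneg_eq_0_iff[of V "\<lambda>x. f x * f x"] by auto

lemma ip_qf: "ip V f (mv V A g) = qf V A f g"
  unfolding ip_def mv_def qf_def by (simp add: sum_distrib_left mult.assoc)

lemma qf_comm: assumes "\<forall>x y. A x y = A y x" shows "qf V A f g = qf V A g f"
  unfolding qf_def using assms by (subst sum.swap) (simp add: mult.commute mult.left_commute)

lemma qf_cong: "(\<And>x. x \<in> V \<Longrightarrow> f x = f' x) \<Longrightarrow> (\<And>x. x \<in> V \<Longrightarrow> g x = g' x) \<Longrightarrow> qf V A f g = qf V A f' g'"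
  unfolding qf_def by (intro sum.cong refl) auto

lemma qf_add_left: "qf V A (\<lambda>x. f x + g x) h = qf V A f h + qf V A g h"
  unfolding qf_def by (simp add: distrib_right sum.distrib)
lemma qf_add_right: "qf V A h (\<lambda>x. f x + g x) = qf V A h f + qf V A h g"
  unfolding qf_def by (simp add: distrib_left sum.distrib)
lemma qf_scale_left: "qf V A (\<lambda>x. c * f x) h = c * qf V A f h"
  unfolding qf_def by (simp add: sum_distrib_left mult.assoc)
lemma qf_scale_right: "qf V A h (\<lambda>x. c * f x) = c * qf V A h f"
  unfolding qf_def by (simp add: sum_distrib_left mult.assoc mult.left_commute)

lemma trace_orthon:
  assumes "orthon V u k"
  shows "(\<Sum>x\<in>V. \<Sum>i<k. (u i x)^2) = real k"
proof -
  have "(\<Sum>x\<in>V. \<Sum>i<k. (u i x)^2) = (\<Sum>i<k. ip V (u i) (u i))"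
    unfolding ip_def by (subst sum.swap) (simp add: power2_eq_square)
  also have "\<dots> = (\<Sum>i<k. 1)" using assms unfolding orthon_def by simp
  finally show ?thesis by simp
qed





lemma bessel:
  fixes f :: "'a \<Rightarrow> real"
  assumes "orthon V u k"
  defines "r \<equiv> (\<lambda>x. f x - (\<Sum>i<k. ip V f (u i) * u i x))"
  shows "\<And>j. j < k \<Longrightarrow> ip V r (u j) = 0"
    and "ip V r r = ip V f f - (\<Sum>i<k. (ip V f (u i))^2)"
proof -
  have perp: "ip V r (u j) = 0" if "j < k" for j
  proof -
    have "ip V r (u j) = ip V f (u j) - (\<Sum>i<k. ip V f (u i) * ip V (u i) (u j))"
      unfolding r_def by (simp only: ip_diff_left ip_sum_left)
    also have "(\<Sum>i<k. ip V f (u i) * ip V (u i) (u j)) = (\<Sum>i<k. if i = j then ip V f (u j) else 0)"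
      using assms(1) that by (intro sum.cong refl) (simp add: orthon_def)
    also have "\<dots> = ip V f (u j)" using that by (simp add: sum.delta)
    finally show ?thesis by linarith
  qed
  then show "\<And>j. j < k \<Longrightarrow> ip V r (u j) = 0" .
  have "ip V r r = ip V r f - (\<Sum>i<k. ip V f (u i) * ip V r (u i))"
    by (subst (2) r_def, simp only: ip_diff_right ip_sum_right)
  also have "(\<Sum>i<k. ip V f (u i) * ip V r (u i)) = 0"
    by (rule sum.neutral) (simp add: perp)
  also have "ip V r f - 0 = ip V r f" by simp
  also have "\<dots> = ip V f f - (\<Sum>i<k. ip V f (u i) * ip V (u i) f)"
    unfolding r_def by (simp only: ip_diff_left ip_sum_left)
  also have "\<dots> = ip V f f - (\<Sum>i<k. (ip V f (u i))^2)"
    by (intro arg_cong[where f="\<lambda>z. ip V f f - z"] sum.cong refl) (simp add: ip_comm[of V "u _" f] power2_eq_square)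
  finally show "ip V r r = ip V f f - (\<Sum>i<k. (ip V f (u i))^2)" .
qed





lemma ip_add_right: "ip V h (\<lambda>x. f x + g x) = ip V h f + ip V h g"
  unfolding ip_def by (simp add: distrib_left sum.distrib)

lemma ip_scale_right: "ip V h (\<lambda>x. c * f x) = c * ip V h f"
  unfolding ip_def by (simp add: sum_distrib_left mult.left_commute)

lemma quad_zero:
  fixes b c :: real
  assumes "\<And>e. 0 \<le> 2*e*b + e^2*c"
  shows "b = 0"
proof (cases "c \<le> 0")
  case True
  have "0 \<le> 2*(-b)*b + (-b)^2*c" by (rule assms)
  moreover have "(-b)^2*c \<le> 0" using True by (simp add: mult_nonneg_nonpos)
  ultimately have "0 \<le> -2*b*b" by simp
  moreover have "0 \<le> b*b" by simp
  ultimately show ?thesis by simp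
next
  case False
  have "0 \<le> 2*(-b/c)*b + (-b/c)^2*c" by (rule assms)
  also have "2*(-b/c)*b + (-b/c)^2*c = - (b*b)/c" using False by (simp add: power2_eq_square field_simps)
  finally have "0 \<le> -(b*b)/c" .
  then have "b*b \<le> 0" using False by (simp add: divide_le_0_iff) 
  then show ?thesis using mult_le_0_iff[of b b] by linarith
qed

lemma sq_le_ip: "finite V \<Longrightarrow> x \<in> V \<Longrightarrow> (f x)^2 \<le> ip V f f"
  unfolding ip_def power2_eq_square
  by (rule member_le_sum[where f="\<lambda>x. f x * f x"]) auto

lemma exists_perp:
  assumes fin: "finite V" and on: "orthon V u k" and kn: "k < card V"
  shows "\<exists>r. (\<forall>x. x \<notin> V \<longrightarrow> r x = 0) \<and> ip V r r = 1 \<and> (\<forall>i<k. ip V r (u i) = 0)"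
proof -
  have "(\<Sum>x\<in>V. (1 - (\<Sum>i<k. (u i x)^2))) = real (card V) - real k"
    using trace_orthon[OF on] by (simp add: sum_subtractf)
  then have pos: "0 < (\<Sum>x\<in>V. (1 - (\<Sum>i<k. (u i x)^2)))" using kn by simp
  have "\<exists>x0\<in>V. 0 < 1 - (\<Sum>i<k. (u i x0)^2)"
  proof (rule ccontr)
    assume "\<not> ?thesis"
    then have "\<forall>x\<in>V. 1 - (\<Sum>i<k. (u i x)^2) \<le> 0" by (simp add: not_less)
    then have "(\<Sum>x\<in>V. (1 - (\<Sum>i<k. (u i x)^2))) \<le> 0" by (intro sum_nonpos) blast
    with pos show False by linarith
  qed
  then obtain x0 where x0: "x0 \<in> V" "0 < 1 - (\<Sum>i<k. (u i x0)^2)" by blast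
  define d where "d = (\<lambda>x. if x = x0 then 1 else 0::real)"
  have dip: "ip V d g = g x0" for g
  proof -
    have "ip V d g = (\<Sum>x\<in>V. if x = x0 then g x else 0)"
      unfolding ip_def d_def by (intro sum.cong refl) simp
    also have "\<dots> = g x0" using fin x0(1) by (simp add: sum.delta)
    finally show ?thesis .
  qed
  define r0 where "r0 = (\<lambda>x. d x - (\<Sum>i<k. ip V d (u i) * u i x))"
  have perp0: "\<And>j. j < k \<Longrightarrow> ip V r0 (u j) = 0"
    using bessel(1)[OF on, of _ d] unfolding r0_def by blast
  have n0: "ip V r0 r0 = ip V d d - (\<Sum>i<k. (ip V d (u i))^2)"
    using bessel(2)[OF on, of d] unfolding r0_def by blast
  have n1: "ip V r0 r0 = 1 - (\<Sum>i<k. (u i x0)^2)"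
    unfolding n0 dip by (simp add: d_def)
  define s where "s = sqrt (ip V r0 r0)"
  have s0: "0 < s" unfolding s_def using n1 x0(2) by simp
  have s2: "s * s = ip V r0 r0" unfolding s_def using n1 x0(2) by simp
  define r where "r = (\<lambda>x. if x \<in> V then r0 x / s else 0)"
  have rip: "ip V r g = ip V r0 g / s" for g
  proof -
    have "ip V r g = (\<Sum>x\<in>V. r0 x * g x / s)"
      unfolding ip_def r_def by (intro sum.cong refl) simp
    also have "\<dots> = ip V r0 g / s" unfolding ip_def by (simp add: sum_divide_distrib)
    finally show ?thesis .
  qed
  have "ip V r r = ip V r0 r / s" by (rule rip)
  also have "ip V r0 r = ip V r r0" by (rule ip_comm)
  also have "ip V r r0 = ip V r0 r0 / s" by (rule rip)
  finally have "ip V r r = ip V r0 r0 / s / s" .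
  also have "\<dots> = 1" using s0 s2[symmetric] by (simp add: field_simps)
  finally have "ip V r r = 1" .
  moreover have "\<forall>i<k. ip V r (u i) = 0" using perp0 rip by simp
  moreover have "\<forall>x. x \<notin> V \<longrightarrow> r x = 0" unfolding r_def by simp
  ultimately show ?thesis by blast
qed




lemma exists_eig_perp:
  assumes fin: "finite V" and sym: "\<forall>x y. A x y = A y x" and on: "orthon V u k"
    and eg: "eig V A u lam k" and kn: "k < card V"
  shows "\<exists>f \<mu>. ip V f f = 1 \<and> (\<forall>i<k. ip V f (u i) = 0) \<and> (\<forall>x\<in>V. mv V A f x = \<mu> * f x)"
proof -
  define B where "B = PiE UNIV (\<lambda>x. if x \<in> V then {-1..1::real} else {0})"
  define C1 where "C1 = {f::'a\<Rightarrow>real. ip V f f = 1}"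
  define C2 where "C2 = (\<Inter>i\<in>{..<k}. {f::'a\<Rightarrow>real. ip V f (u i) = 0})"
  define K where "K = B \<inter> C1 \<inter> C2"
  have cB: "compact B" unfolding B_def by (rule compact_box)
  have cC1: "closed C1" unfolding C1_def
    by (rule closed_Collect_eq[OF cont_ip[of "\<lambda>f. f", OF continuous_on_id] continuous_on_const])
  have cC2: "closed C2" unfolding C2_def
    by (intro closed_INT ballI closed_Collect_eq[OF cont_ip[of "\<lambda>f. u _", OF continuous_on_const] continuous_on_const])
  have cK: "compact K" unfolding K_def using cB cC1 cC2 by blast
  have inK: "f \<in> K \<longleftrightarrow> (\<forall>x. (if x \<in> V then f x \<in> {-1..1} else f x = 0)) \<and> ip V f f = 1 \<and> (\<forall>i<k. ip V f (u i) = 0)" for f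
    unfolding K_def B_def C1_def C2_def by (auto simp: PiE_iff split: if_splits)
  have bnd: "f x \<in> {-1..1}" if "ip V f f = 1" "x \<in> V" for f x
  proof -
    have "(f x)^2 \<le> 1" using sq_le_ip[OF fin that(2), of f] that(1) by simp
    then show ?thesis by (simp add: abs_square_le_1 abs_le_iff)
  qed
  obtain r where r: "\<forall>x. x \<notin> V \<longrightarrow> r x = 0" "ip V r r = 1" "\<forall>i<k. ip V r (u i) = 0"
    using exists_perp[OF fin on kn] by blast
  have "r \<in> K" unfolding inK using r bnd by auto
  then have Kne: "K \<noteq> {}" by blast
  have qfc: "continuous_on K (\<lambda>f. qf V A f f)"
  proof -
    have "continuous_on UNIV (\<lambda>f. ip V f (mv V A f))" by (rule cont_ip[OF cont_mv])
    then show ?thesis unfolding ip_qf by (rule continuous_on_subset) simp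
  qed
  obtain f0 where f0: "f0 \<in> K" "\<And>g. g \<in> K \<Longrightarrow> qf V A f0 f0 \<le> qf V A g g"
    using continuous_attains_inf[OF cK Kne qfc] by blast
  define \<mu> where "\<mu> = qf V A f0 f0"
  have f0n: "ip V f0 f0 = 1" and f0p: "\<forall>i<k. ip V f0 (u i) = 0" using f0(1) unfolding inK by auto
  have geq: "\<mu> * ip V g g \<le> qf V A g g" if gp: "\<forall>i<k. ip V g (u i) = 0" for g
  proof (cases "ip V g g = 0")
    case True
    have z: "x \<in> V \<Longrightarrow> g x = 0" for x using ip_self_zero[OF fin True] by blast
    have "qf V A g g = qf V A (\<lambda>_. 0) (\<lambda>_. 0)" by (rule qf_cong) (simp_all add: z)
    also have "\<dots> = 0" unfolding qf_def by simp
    finally show ?thesis using True by simp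
  next
    case False
    then have gpos: "0 < ip V g g" using ip_self_nonneg[of V g] by linarith
    define s where "s = sqrt (ip V g g)"
    have s0: "0 < s" unfolding s_def using gpos by simp
    have s2: "s * s = ip V g g" unfolding s_def using gpos by simp
    define g' where "g' = (\<lambda>x. if x \<in> V then (1/s) * g x else 0)"
    have ipg': "ip V g' h = (1/s) * ip V g h" for h
    proof -
      have "ip V g' h = ip V (\<lambda>x. (1/s) * g x) h" by (rule ip_cong) (simp_all add: g'_def)
      then show ?thesis by (simp only: ip_scale_left)
    qed
    have "ip V g' g' = (1/s) * ip V g g'" by (rule ipg')
    also have "ip V g g' = ip V g' g" by (rule ip_comm)
    also have "ip V g' g = (1/s) * ip V g g" by (rule ipg')
    finally have "ip V g' g' = (1/s) * ((1/s) * ip V g g)" .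
    then have g'n: "ip V g' g' = 1" using s0 s2[symmetric] by (simp add: field_simps)
    have g'p: "\<forall>i<k. ip V g' (u i) = 0" using gp ipg' by simp
    have g'b: "\<forall>x. (if x \<in> V then g' x \<in> {-1..1} else g' x = 0)"
    proof
      fix x show "if x \<in> V then g' x \<in> {-1..1} else g' x = 0"
        using bnd[OF g'n, of x] by (cases "x \<in> V") (simp_all add: g'_def)
    qed
    have "g' \<in> K" unfolding inK using g'b g'n g'p by blast
    then have "\<mu> \<le> qf V A g' g'" using f0(2) unfolding \<mu>_def by blast
    also have "qf V A g' g' = qf V A (\<lambda>x. (1/s) * g x) (\<lambda>x. (1/s) * g x)"
      by (rule qf_cong) (simp_all add: g'_def)
    also have "\<dots> = (1/s) * ((1/s) * qf V A g g)" by (simp only: qf_scale_left qf_scale_right)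
    finally have "\<mu> \<le> qf V A g g / (s * s)" by simp
    then have "\<mu> \<le> qf V A g g / ip V g g" using s2 by simp
    then show ?thesis using gpos by (simp add: field_simps)
  qed
  have crit: "qf V A f0 g = \<mu> * ip V f0 g" if gp: "\<forall>i<k. ip V g (u i) = 0" for g
  proof -
    define b where "b = qf V A f0 g - \<mu> * ip V f0 g"
    define c where "c = qf V A g g - \<mu> * ip V g g"
    have "0 \<le> 2*e*b + e^2*c" for e
    proof -
      let ?h = "\<lambda>x. f0 x + e * g x"
      have "\<forall>i<k. ip V ?h (u i) = 0" using f0p gp by (simp add: ip_add_left ip_scale_left)
      then have "\<mu> * ip V ?h ?h \<le> qf V A ?h ?h" by (rule geq)
      moreover have "qf V A ?h ?h = qf V A f0 f0 + e * qf V A f0 g + e * qf V A g f0 + e * (e * qf V A g g)"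
        by (simp only: qf_add_left qf_add_right qf_scale_left qf_scale_right add.assoc)
      moreover have "ip V ?h ?h = ip V f0 f0 + e * ip V f0 g + e * ip V g f0 + e * (e * ip V g g)"
        by (simp only: ip_add_left ip_add_right ip_scale_left ip_scale_right add.assoc)
      moreover have "qf V A g f0 = qf V A f0 g" by (rule qf_comm[OF sym])
      moreover have "ip V g f0 = ip V f0 g" by (rule ip_comm)
      ultimately have "\<mu> * (1 + 2 * e * ip V f0 g + e * (e * ip V g g))
          \<le> \<mu> + 2 * e * qf V A f0 g + e * (e * qf V A g g)"
        using f0n unfolding \<mu>_def by (simp add: algebra_simps)
      then show ?thesis unfolding b_def c_def by (simp add: algebra_simps power2_eq_square)
    qed
    then have "b = 0" by (rule quad_zero)
    then show ?thesis unfolding b_def by simp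
  qed
  define g where "g = (\<lambda>x. mv V A f0 x - \<mu> * f0 x)"
  have gp: "\<forall>i<k. ip V g (u i) = 0"
  proof (intro allI impI)
    fix i assume i: "i < k"
    have "ip V g (u i) = ip V (mv V A f0) (u i) - \<mu> * ip V f0 (u i)"
      unfolding g_def by (simp only: ip_diff_left ip_scale_left)
    also have "ip V (mv V A f0) (u i) = qf V A (u i) f0" by (simp only: ip_comm[of V "mv V A f0"] ip_qf)
    also have "\<dots> = qf V A f0 (u i)" by (rule qf_comm[OF sym])
    also have "\<dots> = ip V f0 (mv V A (u i))" by (simp only: ip_qf)
    also have "\<dots> = ip V f0 (\<lambda>x. lam i * u i x)" using eg i unfolding eig_def by (intro ip_cong) auto
    also have "\<dots> = lam i * ip V f0 (u i)" by (rule ip_scale_right)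
    finally show "ip V g (u i) = 0" using f0p i by simp
  qed
  have "ip V g g = ip V g (mv V A f0) - \<mu> * ip V g f0"
    unfolding g_def by (simp only: ip_diff_right ip_scale_right)
  also have "\<dots> = qf V A f0 g - \<mu> * ip V f0 g" by (simp only: ip_qf qf_comm[OF sym, of V g] ip_comm[of V g])
  also have "\<dots> = 0" using crit[OF gp] by simp
  finally have "ip V g g = 0" .
  then have "\<forall>x\<in>V. mv V A f0 x = \<mu> * f0 x" using ip_self_zero[OF fin] unfolding g_def by fastforce
  then show ?thesis using f0n f0p by blast
qed




lemma delta_ip: "finite V \<Longrightarrow> x0 \<in> V \<Longrightarrow> ip V (\<lambda>x. if x = x0 then 1 else 0) g = g x0"
proof -
  assume fin: "finite V" and x0: "x0 \<in> V"
  have "ip V (\<lambda>x. if x = x0 then 1 else 0) g = (\<Sum>x\<in>V. if x = x0 then g x else 0)"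
    unfolding ip_def by (intro sum.cong refl) simp
  also have "\<dots> = g x0" using fin x0 by (simp add: sum.delta)
  finally show ?thesis .
qed

lemma spectral_partial:
  assumes fin: "finite V" and sym: "\<forall>x y. A x y = A y x"
  shows "k \<le> card V \<Longrightarrow> \<exists>u lam. orthon V u k \<and> eig V A u lam k"
proof (induction k)
  case 0 show ?case by (auto simp: orthon_def eig_def)
next
  case (Suc k)
  then obtain u lam where on: "orthon V u k" and eg: "eig V A u lam k" by auto
  from Suc.prems have kn: "k < card V" by simp
  obtain f \<mu> where f: "ip V f f = 1" "\<forall>i<k. ip V f (u i) = 0" "\<forall>x\<in>V. mv V A f x = \<mu> * f x"
    using exists_eig_perp[OF fin sym on eg kn] by blast
  define u' where "u' = u(k := f)"
  define lam' where "lam' = lam(k := \<mu>)"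
  have "orthon V u' (Suc k)"
    unfolding orthon_def
  proof (intro allI impI)
    fix i j assume i: "i < Suc k" and j: "j < Suc k"
    show "ip V (u' i) (u' j) = (if i = j then 1 else 0)"
    proof (cases "i = k"; cases "j = k")
      assume "i = k" "j = k" then show ?thesis using f by (simp add: u'_def)
    next
      assume "i = k" "j \<noteq> k" then show ?thesis using f j by (simp add: u'_def)
    next
      assume "i \<noteq> k" "j = k" then show ?thesis using f i by (simp add: u'_def ip_comm[of V "u i" f])
    next
      assume "i \<noteq> k" "j \<noteq> k" then show ?thesis using on i j by (simp add: u'_def orthon_def)
    qed
  qed
  moreover have "eig V A u' lam' (Suc k)"
    unfolding eig_def
  proof (intro allI impI ballI)
    fix i x assume i: "i < Suc k" and x: "x \<in> V"
    show "mv V A (u' i) x = lam' i * u' i x"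
      using i x f eg by (cases "i = k") (auto simp: u'_def lam'_def eig_def)
  qed
  ultimately show ?case by blast
qed

lemma spectral:
  fixes V :: "'a set" and A :: "'a \<Rightarrow> 'a \<Rightarrow> real"
  assumes fin: "finite V" and sym: "\<forall>x y. A x y = A y x"
  shows "\<exists>u lam. orthon V u (card V) \<and> eig V A u lam (card V) \<and>
     (\<forall>x\<in>V. \<forall>y\<in>V. (\<Sum>i<card V. u i x * u i y) = (if x = y then 1 else 0))"
proof -
  obtain u lam where on: "orthon V u (card V)" and eg: "eig V A u lam (card V)"
    using spectral_partial[OF fin sym, of "card V"] by blast
  let ?n = "card V"
  define d where "d = (\<lambda>(x0::'a) (x::'a). if x = x0 then 1 else (0::real))"
  define r where "r = (\<lambda>x0 x. d x0 x - (\<Sum>i<?n. ip V (d x0) (u i) * u i x))"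
  have rr: "ip V (r x0) (r x0) = 1 - (\<Sum>i<?n. (u i x0)^2)" if "x0 \<in> V" for x0
  proof -
    have "ip V (r x0) (r x0) = ip V (d x0) (d x0) - (\<Sum>i<?n. (ip V (d x0) (u i))^2)"
      using bessel(2)[OF on, of "d x0"] unfolding r_def by blast
    then show ?thesis using delta_ip[OF fin that] unfolding d_def by simp
  qed
  have nonneg: "\<forall>x\<in>V. 0 \<le> 1 - (\<Sum>i<?n. (u i x)^2)"
  proof
    fix x assume "x \<in> V"
    from rr[OF this] ip_self_nonneg[of V "r x"] show "0 \<le> 1 - (\<Sum>i<?n. (u i x)^2)" by linarith
  qed
  have "(\<Sum>x\<in>V. (1 - (\<Sum>i<?n. (u i x)^2))) = real ?n - real ?n"
    using trace_orthon[OF on] by (simp add: sum_subtractf)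
  then have "(\<Sum>x\<in>V. (1 - (\<Sum>i<?n. (u i x)^2))) = 0" by simp
  then have z: "\<forall>x\<in>V. 1 - (\<Sum>i<?n. (u i x)^2) = 0"
    using sum_nonneg_eq_0_iff[OF fin, of "\<lambda>x. 1 - (\<Sum>i<?n. (u i x)^2)"] nonneg by blast
  have comp: "(\<Sum>i<?n. u i x * u i y) = (if x = y then 1 else 0)" if x: "x \<in> V" and y: "y \<in> V" for x y
  proof -
    have "ip V (r x) (r x) = 0" using rr[OF x] z x by simp
    then have "r x y = 0" using ip_self_zero[OF fin _ y] by blast
    moreover have "ip V (d x) (u i) = u i x" for i using delta_ip[OF fin x] unfolding d_def by simp
    ultimately have "d x y = (\<Sum>i<?n. u i x * u i y)" unfolding r_def by simp
    then show ?thesis unfolding d_def by (simp add: eq_commute)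
  qed
  show ?thesis using on eg comp by blast
qed

lemma matpow_spec:
  assumes sym: "\<forall>x y. A x y = A y x"
    and eg: "eig V A u lam n"
    and comp: "\<forall>x\<in>V. \<forall>y\<in>V. (\<Sum>i<n. u i x * u i y) = (if x = y then 1 else 0)"
  shows "x \<in> V \<Longrightarrow> y \<in> V \<Longrightarrow> matpow V A k x y = (\<Sum>i<n. lam i ^ k * u i x * u i y)"
proof (induction k arbitrary: y)
  case 0
  then show ?case using comp by simp
next
  case (Suc k)
  have "matpow V A (Suc k) x y = (\<Sum>z\<in>V. matpow V A k x z * A z y)" by simp
  also have "\<dots> = (\<Sum>z\<in>V. (\<Sum>i<n. lam i ^ k * u i x * u i z) * A z y)"
    using Suc.IH[OF Suc.prems(1)] by (intro sum.cong refl) simp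
  also have "\<dots> = (\<Sum>i<n. lam i ^ k * u i x * (\<Sum>z\<in>V. u i z * A z y))"
    by (simp add: sum_distrib_left sum_distrib_right sum.swap[of _ V] mult.assoc mult.left_commute)
  also have "\<dots> = (\<Sum>i<n. lam i ^ k * u i x * (\<Sum>z\<in>V. A y z * u i z))"
  proof (intro sum.cong refl)
    fix i
    have "(\<Sum>z\<in>V. u i z * A z y) = (\<Sum>z\<in>V. A y z * u i z)"
      by (intro sum.cong refl) (simp add: sym[rule_format, of _ y] mult.commute)
    then show "lam i ^ k * u i x * (\<Sum>z\<in>V. u i z * A z y) = lam i ^ k * u i x * (\<Sum>z\<in>V. A y z * u i z)"
      by simp
  qed
  also have "\<dots> = (\<Sum>i<n. lam i ^ k * u i x * (lam i * u i y))"
    using eg Suc.prems(2) unfolding eig_def mv_def by (intro sum.cong refl) simp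
  also have "\<dots> = (\<Sum>i<n. lam i ^ Suc k * u i x * u i y)"
    by (intro sum.cong refl) (simp add: algebra_simps)
  finally show ?case .
qed

lemma heat_spec:
  assumes sym: "\<forall>x y. A x y = A y x"
    and eg: "eig V A u lam n"
    and comp: "\<forall>x\<in>V. \<forall>y\<in>V. (\<Sum>i<n. u i x * u i y) = (if x = y then 1 else 0)"
    and x: "x \<in> V"
  shows "(\<lambda>k. (- t) ^ k / fact k * matpow V A k x x) sums (\<Sum>i<n. exp (- t * lam i) * (u i x)^2)"
proof -
  have e: "(\<lambda>k. (- t * lam i) ^ k / fact k * (u i x)^2) sums (exp (- t * lam i) * (u i x)^2)" for i
    using sums_mult2[OF exp_converges[of "- t * lam i"], of "(u i x)^2"] by (simp add: divide_inverse mult.commute)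
  have "(\<lambda>k. \<Sum>i<n. (- t * lam i) ^ k / fact k * (u i x)^2) sums (\<Sum>i<n. exp (- t * lam i) * (u i x)^2)"
    by (rule sums_sum) (rule e)
  moreover have "(- t) ^ k / fact k * matpow V A k x x = (\<Sum>i<n. (- t * lam i) ^ k / fact k * (u i x)^2)" for k
  proof -
    have "(- t) ^ k / fact k * matpow V A k x x = (\<Sum>i<n. (- t) ^ k / fact k * (lam i ^ k * u i x * u i x))"
      by (simp add: matpow_spec[OF sym eg comp x x] sum_distrib_left)
    also have "\<dots> = (\<Sum>i<n. (- t * lam i) ^ k / fact k * (u i x)^2)"
      by (intro sum.cong refl) (simp only: power_mult_distrib power2_eq_square, simp add: field_simps)
    finally show ?thesis .
  qed
  ultimately show ?thesis by simp
qed




lemma exp_eq_one_plus: fixes z :: real assumes "exp z = 1 + z" shows "z = 0"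
proof (cases "z < -2")
  case True
  then have "1 + z < 0" by simp
  moreover have "0 < exp z" by simp
  ultimately show ?thesis using assms by simp
next
  case False
  have "0 \<le> 1 + z/2" using False by simp
  also have "1 + z/2 \<le> exp (z/2)" by (rule exp_ge_add_one_self)
  finally have "(1 + z/2)^2 \<le> (exp (z/2))^2"
    using \<open>0 \<le> 1 + z/2\<close> exp_ge_add_one_self[of "z/2"] by (intro power_mono) auto
  also have "(exp (z/2))^2 = exp z" by (simp add: power2_eq_square exp_add[symmetric])
  finally have "1 + z + z^2/4 \<le> 1 + z" using assms by (simp add: power2_eq_square field_simps)
  then have "z^2 \<le> 0" by simp
  then show ?thesis by simp
qed

lemma jensen_exp:
  fixes p a :: "'i \<Rightarrow> real"
  assumes fin: "finite I" and p0: "\<forall>i\<in>I. 0 \<le> p i" and p1: "(\<Sum>i\<in>I. p i) = 1"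
  shows "exp (\<Sum>i\<in>I. p i * a i) \<le> (\<Sum>i\<in>I. p i * exp (a i))"
    and "exp (\<Sum>i\<in>I. p i * a i) = (\<Sum>i\<in>I. p i * exp (a i)) \<Longrightarrow> \<forall>i\<in>I. p i \<noteq> 0 \<longrightarrow> a i = (\<Sum>i\<in>I. p i * a i)"
proof -
  define m where "m = (\<Sum>i\<in>I. p i * a i)"
  define D where "D = (\<lambda>i. p i * (exp (a i) - exp m * (1 + (a i - m))))"
  have pt: "exp m * (1 + (a i - m)) \<le> exp (a i)" for i
  proof -
    have "exp m * (1 + (a i - m)) \<le> exp m * exp (a i - m)"
      by (intro mult_left_mono exp_ge_add_one_self) simp
    also have "\<dots> = exp (a i)" by (simp add: exp_diff)
    finally show ?thesis .
  qed
  have D0: "\<forall>i\<in>I. 0 \<le> D i" unfolding D_def using p0 pt by (simp add: mult_nonneg_nonneg)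
  have "(\<Sum>i\<in>I. p i * (exp m * (1 + (a i - m)))) = exp m * ((\<Sum>i\<in>I. p i) + (\<Sum>i\<in>I. p i * a i) - m * (\<Sum>i\<in>I. p i))"
    by (simp add: algebra_simps sum.distrib sum_subtractf sum_distrib_left sum_distrib_right)
  also have "\<dots> = exp m" using p1 unfolding m_def by simp
  finally have lin: "(\<Sum>i\<in>I. p i * (exp m * (1 + (a i - m)))) = exp m" .
  have SD: "(\<Sum>i\<in>I. D i) = (\<Sum>i\<in>I. p i * exp (a i)) - exp m"
    unfolding D_def using lin by (simp add: right_diff_distrib sum_subtractf)
  have "0 \<le> (\<Sum>i\<in>I. D i)" using D0 by (intro sum_nonneg) auto
  then show "exp (\<Sum>i\<in>I. p i * a i) \<le> (\<Sum>i\<in>I. p i * exp (a i))" using SD unfolding m_def by simp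
  assume eq: "exp (\<Sum>i\<in>I. p i * a i) = (\<Sum>i\<in>I. p i * exp (a i))"
  then have "(\<Sum>i\<in>I. D i) = 0" using SD unfolding m_def by simp
  then have Dz: "\<forall>i\<in>I. D i = 0" using sum_nonneg_eq_0_iff[OF fin, of D] D0 by blast
  show "\<forall>i\<in>I. p i \<noteq> 0 \<longrightarrow> a i = (\<Sum>i\<in>I. p i * a i)"
  proof (intro ballI impI)
    fix i assume i: "i \<in> I" and pn: "p i \<noteq> 0"
    have "D i = 0" using Dz i by blast
    then have "exp (a i) - exp m * (1 + (a i - m)) = 0" using pn unfolding D_def by simp
    then have "exp (a i) = exp m * (1 + (a i - m))" by simp
    then have "exp (a i - m) = 1 + (a i - m)" by (simp add: exp_diff field_simps)
    then have "a i - m = 0" by (rule exp_eq_one_plus)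
    then show "a i = (\<Sum>i\<in>I. p i * a i)" unfolding m_def by simp
  qed
qed

lemma expand_form:
  assumes fin: "finite V"
    and B: "\<forall>x\<in>V. \<forall>y\<in>V. B x y = (\<Sum>k<n. c k * v k x * v k y)"
  shows "(\<Sum>k<n. c k * (ip V w (v k))^2) = qf V B w w"
proof -
  have "(\<Sum>k<n. c k * (ip V w (v k))^2) = (\<Sum>k<n. \<Sum>x\<in>V. \<Sum>y\<in>V. w x * (c k * v k x * v k y) * w y)"
    unfolding ip_def power2_eq_square
    by (simp add: sum_distrib_left sum_distrib_right mult_ac)
  also have "\<dots> = (\<Sum>x\<in>V. \<Sum>y\<in>V. w x * (\<Sum>k<n. c k * v k x * v k y) * w y)"
    by (simp add: sum_distrib_left sum_distrib_right sum.swap[of _ "{..<n}"])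
  also have "\<dots> = qf V B w w" unfolding qf_def using B by (intro sum.cong refl) simp
  finally show ?thesis .
qed

lemma sum_delta_mult: "finite V \<Longrightarrow> x \<in> V \<Longrightarrow> (\<Sum>y\<in>V. g y * (if x = y then 1 else 0) * h y) = g x * (h x::real)"
proof -
  assume "finite V" "x \<in> V"
  have "(\<Sum>y\<in>V. g y * (if x = y then 1 else 0) * h y) = (\<Sum>y\<in>V. if x = y then g y * h y else 0)"
    by (rule sum.cong) auto
  also have "\<dots> = g x * h x" using \<open>finite V\<close> \<open>x \<in> V\<close> by (simp add: sum.delta)
  finally show ?thesis .
qed

lemma qf_delta: "finite V \<Longrightarrow> qf V (\<lambda>x y. if x = y then 1 else 0) w w = ip V w w"
  unfolding qf_def ip_def by (intro sum.cong refl) (rule sum_delta_mult)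

lemma parseval:
  assumes fin: "finite V"
    and comp: "\<forall>x\<in>V. \<forall>y\<in>V. (\<Sum>k<n. v k x * v k y) = (if x = y then 1 else 0)"
  shows "(\<Sum>k<n. (ip V w (v k))^2) = ip V w w"
  using expand_form[OF fin, where B="\<lambda>x y. if x = y then 1 else 0" and n=n and c="\<lambda>_. 1" and v=v and w=w] comp qf_delta[OF fin]
  by simp

lemma matpow_one: "x \<in> V \<Longrightarrow> finite V \<Longrightarrow> matpow V A (Suc 0) x y = A x y"
  using sum_delta_mult[of V x "\<lambda>_. 1" "\<lambda>z. A z y"] by simp




lemma lap_sym: "mgraph V m \<Longrightarrow> \<forall>x y. laplacian V m x y = laplacian V m y x"
  unfolding laplacian_def mgraph_def by auto

lemma lap_alt: "mgraph V m \<Longrightarrow> laplacian V m x y = (if x = y then (\<Sum>z\<in>V. real (m x z)) else 0) - real (m x y)"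
  unfolding laplacian_def mgraph_def by auto

lemma lap_mv:
  assumes g: "mgraph V m" and x: "x \<in> V"
  shows "mv V (laplacian V m) f x = (\<Sum>y\<in>V. real (m x y) * (f x - f y))"
proof -
  have fin: "finite V" using g unfolding mgraph_def by simp
  have "mv V (laplacian V m) f x = (\<Sum>y\<in>V. (if x = y then (\<Sum>z\<in>V. real (m x z)) * f y else 0) - real (m x y) * f y)"
    unfolding mv_def lap_alt[OF g] by (intro sum.cong refl) (simp add: left_diff_distrib)
  also have "\<dots> = (\<Sum>z\<in>V. real (m x z)) * f x - (\<Sum>y\<in>V. real (m x y) * f y)"
    using fin x by (simp add: sum_subtractf sum.delta)
  also have "\<dots> = (\<Sum>y\<in>V. real (m x y) * (f x - f y))"
    by (simp add: right_diff_distrib sum_subtractf sum_distrib_right)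
  finally show ?thesis .
qed

lemma energy:
  assumes g: "mgraph V m"
  shows "2 * ip V f (mv V (laplacian V m) f) = (\<Sum>x\<in>V. \<Sum>y\<in>V. real (m x y) * (f x - f y)^2)"
proof -
  have sym: "m x y = m y x" for x y using g unfolding mgraph_def by simp
  define S where "S = (\<Sum>x\<in>V. \<Sum>y\<in>V. real (m x y) * (f x * f x - f x * f y))"
  have "ip V f (mv V (laplacian V m) f) = (\<Sum>x\<in>V. f x * (\<Sum>y\<in>V. real (m x y) * (f x - f y)))"
    unfolding ip_def using lap_mv[OF g] by (intro sum.cong refl) simp
  also have "\<dots> = S" unfolding S_def
    by (intro sum.cong refl) (simp add: sum_distrib_left algebra_simps)
  finally have e1: "ip V f (mv V (laplacian V m) f) = S" .
  have "S = (\<Sum>y\<in>V. \<Sum>x\<in>V. real (m x y) * (f x * f x - f x * f y))" unfolding S_def by (rule sum.swap)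
  also have "\<dots> = (\<Sum>x\<in>V. \<Sum>y\<in>V. real (m x y) * (f y * f y - f x * f y))"
    by (intro sum.cong refl) (simp add: sym mult.commute)
  finally have e2: "S = (\<Sum>x\<in>V. \<Sum>y\<in>V. real (m x y) * (f y * f y - f x * f y))" .
  have "2 * S = S + S" by simp
  also have "\<dots> = (\<Sum>x\<in>V. \<Sum>y\<in>V. real (m x y) * (f x * f x - f x * f y) + real (m x y) * (f y * f y - f x * f y))"
    by (subst (2) e2) (simp add: S_def sum.distrib)
  also have "\<dots> = (\<Sum>x\<in>V. \<Sum>y\<in>V. real (m x y) * (f x - f y)^2)"
    by (intro sum.cong refl) (simp add: power2_eq_square algebra_simps)
  finally show ?thesis using e1 by simp
qed

lemma matpow_iso:
  assumes bij: "bij_betw \<phi> VH W"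
    and AB: "\<forall>y\<in>VH. \<forall>y'\<in>VH. A (\<phi> y) (\<phi> y') = B y y'"
  shows "y \<in> VH \<Longrightarrow> y' \<in> VH \<Longrightarrow> matpow W A k (\<phi> y) (\<phi> y') = matpow VH B k y y'"
proof (induction k arbitrary: y')
  case 0
  have "inj_on \<phi> VH" using bij by (rule bij_betw_imp_inj_on)
  then show ?case using 0 by (auto dest: inj_onD)
next
  case (Suc k)
  have "matpow W A (Suc k) (\<phi> y) (\<phi> y') = (\<Sum>z\<in>W. matpow W A k (\<phi> y) z * A z (\<phi> y'))" by simp
  also have "\<dots> = (\<Sum>z\<in>VH. matpow W A k (\<phi> y) (\<phi> z) * A (\<phi> z) (\<phi> y'))"
    by (rule sum.reindex_bij_betw[OF bij, symmetric])
  also have "\<dots> = (\<Sum>z\<in>VH. matpow VH B k y z * B z y')"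
    using Suc AB by (intro sum.cong refl) simp
  finally show ?case by simp
qed

lemma lap_iso:
  assumes bij: "bij_betw \<phi> VH W"
    and em: "\<forall>y\<in>VH. \<forall>y'\<in>VH. e (\<phi> y) (\<phi> y') = mH y y'"
  shows "\<forall>y\<in>VH. \<forall>y'\<in>VH. laplacian W e (\<phi> y) (\<phi> y') = laplacian VH mH y y'"
proof (intro ballI)
  fix y y' assume y: "y \<in> VH" and y': "y' \<in> VH"
  have inj: "inj_on \<phi> VH" using bij by (rule bij_betw_imp_inj_on)
  have "(\<Sum>z\<in>W. real (e (\<phi> y) z)) = (\<Sum>z\<in>VH. real (e (\<phi> y) (\<phi> z)))"
    by (rule sum.reindex_bij_betw[OF bij, symmetric])
  also have "\<dots> = (\<Sum>z\<in>VH. real (mH y z))" using em y by (intro sum.cong refl) simp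
  finally have d: "(\<Sum>z\<in>W. real (e (\<phi> y) z)) = (\<Sum>z\<in>VH. real (mH y z))" .
  have "\<phi> y = \<phi> y' \<longleftrightarrow> y = y'" using inj y y' by (auto dest: inj_onD)
  then show "laplacian W e (\<phi> y) (\<phi> y') = laplacian VH mH y y'"
    unfolding laplacian_def using d em y y' by auto
qed

lemma heat_iso:
  assumes bij: "bij_betw \<phi> VH W"
    and em: "\<forall>y\<in>VH. \<forall>y'\<in>VH. e (\<phi> y) (\<phi> y') = mH y y'"
    and y: "y \<in> VH"
  shows "heat_kernel W e t (\<phi> y) = heat_kernel VH mH t y"
  unfolding heat_kernel_def using matpow_iso[OF bij lap_iso[OF bij em] y y] by simp




locale tsetup =
  fixes VG :: "'a set" and mG :: "'a \<Rightarrow> 'a \<Rightarrow> nat"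
    and VH :: "'b set" and mH :: "'b \<Rightarrow> 'b \<Rightarrow> nat"
    and N :: nat and W :: "nat \<Rightarrow> 'a set" and e :: "nat \<Rightarrow> 'a \<Rightarrow> 'a \<Rightarrow> nat"
    and \<phi> :: "nat \<Rightarrow> 'b \<Rightarrow> 'a" and c :: nat
    and u :: "nat \<Rightarrow> 'a \<Rightarrow> real" and lam :: "nat \<Rightarrow> real"
    and v :: "nat \<Rightarrow> 'b \<Rightarrow> real" and nu :: "nat \<Rightarrow> real"
  assumes gG: "mgraph VG mG" and gH: "mgraph VH mH"
    and T1: "\<forall>l<N. W l \<subseteq> VG"
    and T2: "\<forall>l<N. \<forall>x y. e l x y \<le> mG x y"
    and T3: "\<forall>l<N. \<forall>x y. 0 < e l x y \<longrightarrow> x \<in> W l \<and> y \<in> W l"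
    and T4: "\<forall>l<N. bij_betw (\<phi> l) VH (W l)"
    and T5: "\<forall>l<N. \<forall>y\<in>VH. \<forall>y'\<in>VH. e l (\<phi> l y) (\<phi> l y') = mH y y'"
    and T6: "\<forall>x\<in>VG. card {l. l < N \<and> x \<in> W l} = c"
    and cpos: "0 < c"
    and onG: "orthon VG u (card VG)" and egG: "eig VG (laplacian VG mG) u lam (card VG)"
    and compG: "\<forall>x\<in>VG. \<forall>y\<in>VG. (\<Sum>i<card VG. u i x * u i y) = (if x = y then 1 else 0)"
    and onH: "orthon VH v (card VH)" and egH: "eig VH (laplacian VH mH) v nu (card VH)"
    and compH: "\<forall>x\<in>VH. \<forall>y\<in>VH. (\<Sum>i<card VH. v i x * v i y) = (if x = y then 1 else 0)"
begin

lemma finG: "finite VG" using gG unfolding mgraph_def by simp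
lemma finH: "finite VH" using gH unfolding mgraph_def by simp

lemma dc: "(\<Sum>l<N. \<Sum>y\<in>VH. F (\<phi> l y)) = real c * (\<Sum>x\<in>VG. F x)"
proof -
  have "(\<Sum>y\<in>VH. F (\<phi> l y)) = (\<Sum>x\<in>VG. if x \<in> W l then F x else 0)" if l: "l < N" for l
  proof -
    have "(\<Sum>y\<in>VH. F (\<phi> l y)) = (\<Sum>x\<in>W l. F x)"
      using T4 l by (intro sum.reindex_bij_betw) auto
    also have "\<dots> = (\<Sum>x\<in>VG \<inter> W l. F x)" using T1 l by (intro sum.cong) auto
    also have "\<dots> = (\<Sum>x\<in>VG. if x \<in> W l then F x else 0)"
      by (rule sum.inter_restrict[OF finG])
    finally show ?thesis .
  qed
  then have "(\<Sum>l<N. \<Sum>y\<in>VH. F (\<phi> l y)) = (\<Sum>l<N. \<Sum>x\<in>VG. if x \<in> W l then F x else 0)"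
    by (intro sum.cong refl) simp
  also have "\<dots> = (\<Sum>x\<in>VG. \<Sum>l<N. if x \<in> W l then F x else 0)" by (rule sum.swap)
  also have "\<dots> = (\<Sum>x\<in>VG. real c * F x)"
  proof (intro sum.cong refl)
    fix x assume x: "x \<in> VG"
    have "(\<Sum>l\<in>{..<N} \<inter> {l. x \<in> W l}. F x) = (\<Sum>l<N. if l \<in> {l. x \<in> W l} then F x else 0)"
      by (rule sum.inter_restrict) simp
    then have "(\<Sum>l<N. if x \<in> W l then F x else 0) = (\<Sum>l\<in>{..<N} \<inter> {l. x \<in> W l}. F x)" by simp
    also have "{..<N} \<inter> {l. x \<in> W l} = {l. l < N \<and> x \<in> W l}" by auto
    also have "(\<Sum>l\<in>{l. l < N \<and> x \<in> W l}. F x) = real c * F x" using T6 x by simp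
    finally show "(\<Sum>l<N. if x \<in> W l then F x else 0) = real c * F x" .
  qed
  also have "\<dots> = real c * (\<Sum>x\<in>VG. F x)" by (simp add: sum_distrib_left)
  finally show ?thesis .
qed

lemma edge_sum_le:
  fixes g :: "'a \<Rightarrow> real"
  shows "(\<Sum>l<N. \<Sum>y\<in>VH. \<Sum>y'\<in>VH. real (mH y y') * (g (\<phi> l y) - g (\<phi> l y'))^2)
     \<le> real c * (\<Sum>x\<in>VG. \<Sum>x'\<in>VG. real (mG x x') * (g x - g x')^2)"
proof -
  have step: "(\<Sum>y\<in>VH. \<Sum>y'\<in>VH. real (mH y y') * (g (\<phi> l y) - g (\<phi> l y'))^2)
      = (\<Sum>x\<in>VG. \<Sum>x'\<in>VG. real (e l x x') * (g x - g x')^2)" if l: "l < N" for l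
  proof -
    have bij: "bij_betw (\<phi> l) VH (W l)" using T4 l by simp
    have "(\<Sum>y\<in>VH. \<Sum>y'\<in>VH. real (mH y y') * (g (\<phi> l y) - g (\<phi> l y'))^2)
        = (\<Sum>y\<in>VH. \<Sum>y'\<in>VH. real (e l (\<phi> l y) (\<phi> l y')) * (g (\<phi> l y) - g (\<phi> l y'))^2)"
      using T5 l by (intro sum.cong refl) simp
    also have "\<dots> = (\<Sum>y\<in>VH. \<Sum>x'\<in>W l. real (e l (\<phi> l y) x') * (g (\<phi> l y) - g x')^2)"
      by (intro sum.cong refl sum.reindex_bij_betw[OF bij])
    also have "\<dots> = (\<Sum>x\<in>W l. \<Sum>x'\<in>W l. real (e l x x') * (g x - g x')^2)"
      by (rule sum.reindex_bij_betw[OF bij, where g="\<lambda>x. \<Sum>x'\<in>W l. real (e l x x') * (g x - g x')^2"])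
    also have "\<dots> = (\<Sum>x\<in>W l. \<Sum>x'\<in>VG. real (e l x x') * (g x - g x')^2)"
    proof (rule sum.cong[OF refl])
      fix x
      have sub: "W l \<subseteq> VG" using T1 l by simp
      have z: "\<forall>i\<in>VG - W l. real (e l x i) * (g x - g i)\<^sup>2 = 0" using T3 l by fastforce
      show "(\<Sum>x'\<in>W l. real (e l x x') * (g x - g x')^2) = (\<Sum>x'\<in>VG. real (e l x x') * (g x - g x')^2)"
        by (rule sum.mono_neutral_left[OF finG sub z])
    qed
    also have "\<dots> = (\<Sum>x\<in>VG. \<Sum>x'\<in>VG. real (e l x x') * (g x - g x')^2)"
    proof -
      have sub: "W l \<subseteq> VG" using T1 l by simp
      have z: "\<forall>i\<in>VG - W l. (\<Sum>x'\<in>VG. real (e l i x') * (g i - g x')\<^sup>2) = 0"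
      proof
        fix i assume i: "i \<in> VG - W l"
        have "e l i x' = 0" for x' using T3 l i by (metis DiffD2 gr0I)
        then show "(\<Sum>x'\<in>VG. real (e l i x') * (g i - g x')\<^sup>2) = 0" by simp
      qed
      show ?thesis by (rule sum.mono_neutral_left[OF finG sub z])
    qed
    finally show ?thesis .
  qed
  have "(\<Sum>l<N. \<Sum>y\<in>VH. \<Sum>y'\<in>VH. real (mH y y') * (g (\<phi> l y) - g (\<phi> l y'))^2)
      = (\<Sum>l<N. \<Sum>x\<in>VG. \<Sum>x'\<in>VG. real (e l x x') * (g x - g x')^2)"
    using step by (intro sum.cong refl) simp
  also have "\<dots> = (\<Sum>x\<in>VG. \<Sum>x'\<in>VG. (\<Sum>l<N. real (e l x x')) * (g x - g x')^2)"
    by (simp add: sum_distrib_right sum.swap[of _ "{..<N}"])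
  also have "\<dots> \<le> (\<Sum>x\<in>VG. \<Sum>x'\<in>VG. (real c * real (mG x x')) * (g x - g x')^2)"
  proof (intro sum_mono mult_right_mono)
    fix x x' assume x: "x \<in> VG"
    have "(\<Sum>l<N. real (e l x x')) = (\<Sum>l<N. if x \<in> W l then real (e l x x') else 0)"
      using T3 by (intro sum.cong refl) (auto simp: not_less)
    also have "\<dots> \<le> (\<Sum>l<N. if x \<in> W l then real (mG x x') else 0)"
      using T2 by (intro sum_mono) auto
    also have "\<dots> = (\<Sum>l\<in>{..<N} \<inter> {l. x \<in> W l}. real (mG x x'))"
    proof -
      have "(\<Sum>l\<in>{..<N} \<inter> {l. x \<in> W l}. real (mG x x')) = (\<Sum>l<N. if l \<in> {l. x \<in> W l} then real (mG x x') else 0)"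
        by (rule sum.inter_restrict) simp
      then show ?thesis by simp
    qed
    also have "{..<N} \<inter> {l. x \<in> W l} = {l. l < N \<and> x \<in> W l}" by auto
    also have "(\<Sum>l\<in>{l. l < N \<and> x \<in> W l}. real (mG x x')) = real c * real (mG x x')" using T6 x by simp
    finally show "(\<Sum>l<N. real (e l x x')) \<le> real c * real (mG x x')" .
  qed simp
  also have "\<dots> = real c * (\<Sum>x\<in>VG. \<Sum>x'\<in>VG. real (mG x x') * (g x - g x')^2)"
    by (simp add: sum_distrib_left mult.assoc)
  finally show ?thesis .
qed

end




lemma cart_sum: "(\<Sum>i\<in>A \<times> B. f i) = (\<Sum>x\<in>A. \<Sum>y\<in>B. f (x, y))"
  by (simp add: sum.cartesian_product)

lemma trace_heat:
  assumes g: "mgraph V m" and on: "orthon V u (card V)" and eg: "eig V (laplacian V m) u lam (card V)"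
    and comp: "\<forall>x\<in>V. \<forall>y\<in>V. (\<Sum>i<card V. u i x * u i y) = (if x = y then 1 else 0)"
  shows "(\<Sum>x\<in>V. heat_kernel V m t x) = (\<Sum>j<card V. exp (- t * lam j))"
proof -
  have "heat_kernel V m t x = (\<Sum>j<card V. exp (- t * lam j) * (u j x)^2)" if x: "x \<in> V" for x
    unfolding heat_kernel_def using heat_spec[OF lap_sym[OF g] eg comp x, of t] by (simp add: sums_unique[symmetric])
  then have "(\<Sum>x\<in>V. heat_kernel V m t x) = (\<Sum>x\<in>V. \<Sum>j<card V. exp (- t * lam j) * (u j x)^2)"
    by (intro sum.cong refl) simp
  also have "\<dots> = (\<Sum>j<card V. exp (- t * lam j) * ip V (u j) (u j))"
    unfolding ip_def by (simp add: sum.swap[of _ V] sum_distrib_left power2_eq_square)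
  also have "\<dots> = (\<Sum>j<card V. exp (- t * lam j))"
    using on unfolding orthon_def by (intro sum.cong refl) simp
  finally show ?thesis .
qed

context tsetup begin

definition aa :: "nat \<Rightarrow> nat \<Rightarrow> nat \<Rightarrow> real" where
  "aa l j k = ip VH (\<lambda>y. u j (\<phi> l y)) (v k)"

definition RR :: "real \<Rightarrow> nat \<Rightarrow> real" where
  "RR t j = (\<Sum>l<N. \<Sum>k<card VH. (aa l j k)^2 / real c * exp (- t * nu k))"

lemma LH_form: "\<forall>y\<in>VH. \<forall>y'\<in>VH. laplacian VH mH y y' = (\<Sum>k<card VH. nu k * v k y * v k y')"
  using matpow_spec[OF lap_sym[OF gH] egH compH, of _ _ "Suc 0"] matpow_one[OF _ finH] by simp

lemma LG_form: "\<forall>x\<in>VG. \<forall>x'\<in>VG. laplacian VG mG x x' = (\<Sum>j<card VG. lam j * u j x * u j x')"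
  using matpow_spec[OF lap_sym[OF gG] egG compG, of _ _ "Suc 0"] matpow_one[OF _ finG] by simp

lemma phi_in: "l < N \<Longrightarrow> y \<in> VH \<Longrightarrow> \<phi> l y \<in> VG"
  using T1 T4 bij_betwE by blast

lemma phi_inj: "l < N \<Longrightarrow> y \<in> VH \<Longrightarrow> y' \<in> VH \<Longrightarrow> \<phi> l y = \<phi> l y' \<longleftrightarrow> y = y'"
  using T4 bij_betw_imp_inj_on inj_onD by metis

lemma per_j:
  assumes j: "j < card VG" and t: "0 < t"
  shows "exp (- t * lam j) \<le> RR t j"
    and "exp (- t * lam j) = RR t j \<Longrightarrow> \<forall>l<N. \<forall>k<card VH. aa l j k \<noteq> 0 \<longrightarrow> nu k = lam j"
proof -
  define w where "w = (\<lambda>l y. u j (\<phi> l y))"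
  have aaw: "aa l j k = ip VH (w l) (v k)" for l k unfolding aa_def w_def by simp
  have P1: "(\<Sum>k<card VH. (aa l j k)^2) = ip VH (w l) (w l)" for l
    unfolding aaw by (rule parseval[OF finH compH])
  have P2: "(\<Sum>l<N. ip VH (w l) (w l)) = real c"
  proof -
    have "(\<Sum>l<N. ip VH (w l) (w l)) = (\<Sum>l<N. \<Sum>y\<in>VH. (\<lambda>x. u j x * u j x) (\<phi> l y))"
      unfolding ip_def w_def by simp
    also have "\<dots> = real c * (\<Sum>x\<in>VG. u j x * u j x)" by (rule dc)
    also have "(\<Sum>x\<in>VG. u j x * u j x) = 1" using onG j unfolding orthon_def ip_def by simp
    finally show ?thesis by simp
  qed
  have P3: "2 * (\<Sum>k<card VH. nu k * (aa l j k)^2) = (\<Sum>y\<in>VH. \<Sum>y'\<in>VH. real (mH y y') * (w l y - w l y')^2)" for l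
  proof -
    have "(\<Sum>k<card VH. nu k * (aa l j k)^2) = qf VH (laplacian VH mH) (w l) (w l)"
      unfolding aaw by (rule expand_form[OF finH LH_form])
    also have "\<dots> = ip VH (w l) (mv VH (laplacian VH mH) (w l))" by (simp add: ip_qf)
    finally show ?thesis using energy[OF gH, of "w l"] by simp
  qed
  have ipu: "ip VG (u j) (mv VG (laplacian VG mG) (u j)) = lam j"
  proof -
    have "ip VG (u j) (mv VG (laplacian VG mG) (u j)) = ip VG (u j) (\<lambda>x. lam j * u j x)"
      using egG j unfolding eig_def by (intro ip_cong) auto
    also have "\<dots> = lam j" using onG j unfolding orthon_def by (simp add: ip_scale_right)
    finally show ?thesis .
  qed
  have Snu: "(\<Sum>l<N. \<Sum>k<card VH. nu k * (aa l j k)^2) \<le> real c * lam j"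
  proof -
    have "2 * (\<Sum>l<N. \<Sum>k<card VH. nu k * (aa l j k)^2) = (\<Sum>l<N. 2 * (\<Sum>k<card VH. nu k * (aa l j k)^2))"
      by (simp add: sum_distrib_left)
    also have "\<dots> = (\<Sum>l<N. \<Sum>y\<in>VH. \<Sum>y'\<in>VH. real (mH y y') * (u j (\<phi> l y) - u j (\<phi> l y'))^2)"
      using P3 unfolding w_def by simp
    also have "\<dots> \<le> real c * (\<Sum>x\<in>VG. \<Sum>x'\<in>VG. real (mG x x') * (u j x - u j x')^2)"
      by (rule edge_sum_le)
    also have "\<dots> = real c * (2 * lam j)" using energy[OF gG, of "u j"] ipu by simp
    finally show ?thesis by simp
  qed
  define I where "I = {..<N} \<times> {..<card VH}"
  define p where "p = (\<lambda>(l,k). (aa l j k)^2 / real c)"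
  define b where "b = (\<lambda>(l::nat,k). - t * nu k)"
  have cpos': "0 < real c" using cpos by simp
  have finI: "finite I" unfolding I_def by simp
  have p0: "\<forall>i\<in>I. 0 \<le> p i" unfolding p_def using cpos' by auto
  have p1: "(\<Sum>i\<in>I. p i) = 1"
  proof -
    have "(\<Sum>i\<in>I. p i) = (\<Sum>l<N. \<Sum>k<card VH. (aa l j k)^2 / real c)" unfolding I_def p_def cart_sum by simp
    also have "\<dots> = (\<Sum>l<N. ip VH (w l) (w l)) / real c" by (simp only: sum_divide_distrib[symmetric] P1)
    also have "\<dots> = 1" using P2 cpos' by simp
    finally show ?thesis .
  qed
  have pb: "(\<Sum>i\<in>I. p i * b i) = - t / real c * (\<Sum>l<N. \<Sum>k<card VH. nu k * (aa l j k)^2)"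
    unfolding I_def p_def b_def cart_sum by (simp add: sum_distrib_left field_simps)
  have pe: "(\<Sum>i\<in>I. p i * exp (b i)) = RR t j"
    unfolding I_def p_def b_def cart_sum RR_def by simp
  have lb: "- t * lam j \<le> (\<Sum>i\<in>I. p i * b i)"
  proof -
    have "t * (\<Sum>l<N. \<Sum>k<card VH. nu k * (aa l j k)^2) \<le> t * (real c * lam j)"
      using Snu t by (intro mult_left_mono) auto
    then show ?thesis unfolding pb using cpos' by (simp add: field_simps)
  qed
  have J1: "exp (\<Sum>i\<in>I. p i * b i) \<le> (\<Sum>i\<in>I. p i * exp (b i))" by (rule jensen_exp(1)[OF finI p0 p1])
  have E1: "exp (- t * lam j) \<le> exp (\<Sum>i\<in>I. p i * b i)" using lb by simp
  show "exp (- t * lam j) \<le> RR t j" using J1 E1 pe by linarith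
  assume eq: "exp (- t * lam j) = RR t j"
  then have eq1: "exp (\<Sum>i\<in>I. p i * b i) = (\<Sum>i\<in>I. p i * exp (b i))" using J1 E1 pe by linarith
  have "exp (- t * lam j) = exp (\<Sum>i\<in>I. p i * b i)" using J1 E1 pe eq by linarith
  then have eq2: "- t * lam j = (\<Sum>i\<in>I. p i * b i)" by (simp only: exp_inj_iff)
  have J2: "\<forall>i\<in>I. p i \<noteq> 0 \<longrightarrow> b i = (\<Sum>i\<in>I. p i * b i)" by (rule jensen_exp(2)[OF finI p0 p1 eq1])
  show "\<forall>l<N. \<forall>k<card VH. aa l j k \<noteq> 0 \<longrightarrow> nu k = lam j"
  proof (intro allI impI)
    fix l k assume l: "l < N" and k: "k < card VH" and a: "aa l j k \<noteq> 0"
    have "(l,k) \<in> I" unfolding I_def using l k by simp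
    moreover have "p (l,k) \<noteq> 0" unfolding p_def using a cpos' by simp
    ultimately have "b (l,k) = - t * lam j" using J2 eq2 by simp
    then show "nu k = lam j" unfolding b_def using t by simp
  qed
qed

end




context tsetup begin

lemma aa1:
  assumes l: "l < N" and k: "k < card VH"
  shows "(\<Sum>j<card VG. (aa l j k)^2) = 1"
proof -
  have B: "\<forall>y\<in>VH. \<forall>y'\<in>VH. (if y = y' then 1 else 0) = (\<Sum>j<card VG. 1 * u j (\<phi> l y) * u j (\<phi> l y'))"
    using compG phi_in[OF l] phi_inj[OF l] by simp
  have "(\<Sum>j<card VG. 1 * (ip VH (v k) (\<lambda>y. u j (\<phi> l y)))^2) = qf VH (\<lambda>y y'. if y = y' then 1 else 0) (v k) (v k)"
    by (rule expand_form[OF finH B])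
  also have "\<dots> = ip VH (v k) (v k)" by (rule qf_delta[OF finH])
  also have "\<dots> = 1" using onH k unfolding orthon_def by simp
  finally show ?thesis unfolding aa_def by (simp add: ip_comm[of VH "v k"])
qed

lemma sumR: "(\<Sum>j<card VG. RR t j) = real N / real c * (\<Sum>k<card VH. exp (- t * nu k))"
proof -
  have "(\<Sum>j<card VG. RR t j) = (\<Sum>l<N. \<Sum>k<card VH. \<Sum>j<card VG. (aa l j k)^2 / real c * exp (- t * nu k))"
    unfolding RR_def by (simp add: sum.swap[of _ "{..<card VG}"])
  also have "\<dots> = (\<Sum>l<N. \<Sum>k<card VH. (\<Sum>j<card VG. (aa l j k)^2) * (exp (- t * nu k) / real c))"
    unfolding sum_distrib_right by (intro sum.cong refl) simp
  also have "\<dots> = (\<Sum>l<N. \<Sum>k<card VH. exp (- t * nu k) / real c)"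
    using aa1 by (intro sum.cong refl) simp
  also have "\<dots> = real N / real c * (\<Sum>k<card VH. exp (- t * nu k))"
    by (simp add: sum_divide_distrib[symmetric])
  finally show ?thesis .
qed

lemma eq_all:
  assumes t: "0 < t" and eq: "(\<Sum>j<card VG. exp (- t * lam j)) = (\<Sum>j<card VG. RR t j)"
  shows "\<forall>j<card VG. exp (- t * lam j) = RR t j"
proof -
  have nn: "\<forall>j\<in>{..<card VG}. 0 \<le> RR t j - exp (- t * lam j)" using per_j(1)[OF _ t] by simp
  have "(\<Sum>j<card VG. RR t j - exp (- t * lam j)) = 0" using eq by (simp add: sum_subtractf)
  then have "\<forall>j\<in>{..<card VG}. RR t j - exp (- t * lam j) = 0"
    using sum_nonneg_eq_0_iff[of "{..<card VG}" "\<lambda>j. RR t j - exp (- t * lam j)"] nn by simp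
  then show ?thesis by simp
qed

lemma eig_transfer:
  assumes l: "l < N" and hyp: "\<forall>j<card VG. \<forall>k<card VH. aa l j k \<noteq> 0 \<longrightarrow> nu k = lam j"
    and j: "j < card VG" and y: "y \<in> VH"
  shows "mv VH (laplacian VH mH) (\<lambda>y. u j (\<phi> l y)) y = lam j * u j (\<phi> l y)"
proof -
  define w where "w = (\<lambda>y. u j (\<phi> l y))"
  have "mv VH (laplacian VH mH) w y = (\<Sum>y'\<in>VH. (\<Sum>k<card VH. nu k * v k y * v k y') * w y')"
    unfolding mv_def using LH_form y by (intro sum.cong refl) simp
  also have "\<dots> = (\<Sum>k<card VH. nu k * v k y * aa l j k)"
    unfolding aa_def ip_def w_def by (simp add: sum_distrib_left sum_distrib_right sum.swap[of _ VH] mult_ac)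
  also have "\<dots> = (\<Sum>k<card VH. lam j * v k y * aa l j k)"
    using hyp j by (intro sum.cong refl) (metis lessThan_iff mult_zero_right)
  also have "\<dots> = lam j * (\<Sum>y'\<in>VH. w y' * (\<Sum>k<card VH. v k y' * v k y))"
    unfolding aa_def ip_def w_def by (simp add: sum_distrib_left sum_distrib_right sum.swap[of _ VH] mult_ac)
  also have "(\<Sum>y'\<in>VH. w y' * (\<Sum>k<card VH. v k y' * v k y)) = (\<Sum>y'\<in>VH. w y' * (if y' = y then 1 else 0))"
    using compH y by (intro sum.cong refl) simp
  also have "\<dots> = w y" using sum_delta_mult[OF finH y, of w "\<lambda>_. 1"] by (simp add: eq_commute)
  finally show ?thesis unfolding w_def .
qed

lemma lapW:
  assumes l: "l < N" and hyp: "\<forall>j<card VG. \<forall>k<card VH. aa l j k \<noteq> 0 \<longrightarrow> nu k = lam j"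
    and j: "j < card VG" and x: "x \<in> W l"
  shows "(\<Sum>x'\<in>W l. laplacian (W l) (e l) x x' * u j x') = lam j * u j x"
proof -
  have bij: "bij_betw (\<phi> l) VH (W l)" using T4 l by simp
  obtain y where y: "y \<in> VH" and xy: "x = \<phi> l y" using bij x by (metis bij_betw_imp_surj_on imageE)
  have li: "\<forall>y\<in>VH. \<forall>y'\<in>VH. laplacian (W l) (e l) (\<phi> l y) (\<phi> l y') = laplacian VH mH y y'"
    by (rule lap_iso[OF bij]) (use T5 l in simp)
  have "(\<Sum>x'\<in>W l. laplacian (W l) (e l) x x' * u j x') = (\<Sum>y'\<in>VH. laplacian (W l) (e l) x (\<phi> l y') * u j (\<phi> l y'))"
    by (rule sum.reindex_bij_betw[OF bij, symmetric])
  also have "\<dots> = mv VH (laplacian VH mH) (\<lambda>y. u j (\<phi> l y)) y"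
    unfolding mv_def xy using li y by (intro sum.cong refl) simp
  also have "\<dots> = lam j * u j x" using eig_transfer[OF l hyp j y] xy by simp
  finally show ?thesis .
qed

lemma lap_rel:
  assumes l: "l < N" and hyp: "\<forall>j<card VG. \<forall>k<card VH. aa l j k \<noteq> 0 \<longrightarrow> nu k = lam j"
    and x: "x \<in> W l" and z: "z \<in> VG"
  shows "(if z \<in> W l then laplacian (W l) (e l) x z else 0) = laplacian VG mG x z"
proof -
  have WG: "W l \<subseteq> VG" using T1 l by simp
  have finW: "finite (W l)" using WG finG finite_subset by blast
  have xG: "x \<in> VG" using WG x by blast
  have "(\<Sum>j<card VG. (\<Sum>x'\<in>W l. laplacian (W l) (e l) x x' * u j x') * u j z) = (\<Sum>j<card VG. lam j * u j x * u j z)"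
    using lapW[OF l hyp _ x] by (intro sum.cong refl) simp
  also have "\<dots> = laplacian VG mG x z" using LG_form xG z by simp
  finally have A: "(\<Sum>j<card VG. (\<Sum>x'\<in>W l. laplacian (W l) (e l) x x' * u j x') * u j z) = laplacian VG mG x z" .
  have "(\<Sum>j<card VG. (\<Sum>x'\<in>W l. laplacian (W l) (e l) x x' * u j x') * u j z)
      = (\<Sum>x'\<in>W l. laplacian (W l) (e l) x x' * (\<Sum>j<card VG. u j x' * u j z))"
    by (simp add: sum_distrib_left sum_distrib_right sum.swap[of _ "W l"] mult_ac)
  also have "\<dots> = (\<Sum>x'\<in>W l. if x' = z then laplacian (W l) (e l) x x' else 0)"
    using compG WG z by (intro sum.cong refl) auto
  also have "\<dots> = (if z \<in> W l then laplacian (W l) (e l) x z else 0)"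
    using finW by (simp add: sum.delta')
  finally show ?thesis using A by simp
qed

lemma full:
  assumes l: "l < N" and hyp: "\<forall>j<card VG. \<forall>k<card VH. aa l j k \<noteq> 0 \<longrightarrow> nu k = lam j"
    and conn: "connected_mg VG mG"
  shows "mg_iso VH mH VG mG"
proof -
  have WG: "W l \<subseteq> VG" using T1 l by simp
  have bij: "bij_betw (\<phi> l) VH (W l)" using T4 l by simp
  have mGs: "\<forall>x y. 0 < mG x y \<longrightarrow> x \<in> VG \<and> y \<in> VG" and mG0: "\<forall>x. mG x x = 0"
    using gG unfolding mgraph_def by auto
  have closed: "z \<in> W l" if x: "x \<in> W l" and m: "0 < mG x z" for x z
  proof (rule ccontr)
    assume nz: "z \<notin> W l"
    have zG: "z \<in> VG" using mGs m by blast
    have xz: "x \<noteq> z" using x nz by blast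
    have "laplacian VG mG x z = 0" using lap_rel[OF l hyp x zG] nz by simp
    then show False using xz m unfolding laplacian_def by simp
  qed
  have eq: "e l x z = mG x z" if x: "x \<in> W l" and z: "z \<in> W l" and xz: "x \<noteq> z" for x z
  proof -
    have zG: "z \<in> VG" using WG z by blast
    have "laplacian (W l) (e l) x z = laplacian VG mG x z" using lap_rel[OF l hyp x zG] z by simp
    then show ?thesis using xz unfolding laplacian_def by simp
  qed
  have VHne: "VH \<noteq> {}" using gH unfolding mgraph_def by simp
  then obtain y0 where "y0 \<in> VH" by blast
  then have x0: "\<phi> l y0 \<in> W l" using bij bij_betwE by blast
  have WVG: "W l = VG"
  proof
    show "W l \<subseteq> VG" by (rule WG)
    show "VG \<subseteq> W l"
    proof
      fix z assume zG: "z \<in> VG"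
      have "(\<lambda>u v. 0 < mG u v)\<^sup>*\<^sup>* (\<phi> l y0) z" using conn x0 WG zG unfolding connected_mg_def by blast
      then show "z \<in> W l"
      proof (induction rule: rtranclp_induct)
        case base then show ?case by (rule x0)
      next
        case (step y z) then show ?case using closed by blast
      qed
    qed
  qed
  have em: "\<forall>y\<in>VH. \<forall>y'\<in>VH. mG (\<phi> l y) (\<phi> l y') = mH y y'"
  proof (intro ballI)
    fix y y' assume y: "y \<in> VH" and y': "y' \<in> VH"
    have a: "\<phi> l y \<in> W l" "\<phi> l y' \<in> W l" using bij y y' bij_betwE by blast+
    show "mG (\<phi> l y) (\<phi> l y') = mH y y'"
    proof (cases "\<phi> l y = \<phi> l y'")
      case True
      then have "y = y'" using phi_inj[OF l y y'] by simp
      moreover have "e l (\<phi> l y) (\<phi> l y) \<le> mG (\<phi> l y) (\<phi> l y)" using T2 l by simp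
      ultimately show ?thesis using True mG0 T5 l y by (metis le_zero_eq)
    next
      case False
      then show ?thesis using eq[OF a False] T5 l y y' by simp
    qed
  qed
  show ?thesis unfolding mg_iso_def using bij WVG em by auto
qed

end




theorem theorem4p1:
  fixes VG :: "'a set" and mG :: "'a \<Rightarrow> 'a \<Rightarrow> nat"
    and VH :: "'b set" and mH :: "'b \<Rightarrow> 'b \<Rightarrow> nat" and t :: real
  assumes "mgraph VG mG" and "connected_mg VG mG"
    and "mgraph VH mH" and "connected_mg VH mH"
    and "frac_tiles VH mH VG mG"
    and "0 < t"
  shows "(\<Sum>x\<in>VG. heat_kernel VG mG t x) / real (card VG)
           \<le> (\<Sum>x\<in>VH. heat_kernel VH mH t x) / real (card VH)
     \<and> ((\<Sum>x\<in>VG. heat_kernel VG mG t x) / real (card VG)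
           = (\<Sum>x\<in>VH. heat_kernel VH mH t x) / real (card VH)
         \<longleftrightarrow> mg_iso VH mH VG mG)"
proof -
  note gG = assms(1) and conn = assms(2) and gH = assms(3) and ft = assms(5) and t = assms(6)
  have finG: "finite VG" and neG: "VG \<noteq> {}" using gG unfolding mgraph_def by auto
  have finH: "finite VH" and neH: "VH \<noteq> {}" using gH unfolding mgraph_def by auto
  obtain uG lamG where onG: "orthon VG uG (card VG)" and egG: "eig VG (laplacian VG mG) uG lamG (card VG)"
    and compG: "\<forall>x\<in>VG. \<forall>y\<in>VG. (\<Sum>i<card VG. uG i x * uG i y) = (if x = y then 1 else 0)"
    using spectral[OF finG lap_sym[OF gG]] by blast
  obtain vH nuH where onH: "orthon VH vH (card VH)" and egH: "eig VH (laplacian VH mH) vH nuH (card VH)"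
    and compH: "\<forall>x\<in>VH. \<forall>y\<in>VH. (\<Sum>i<card VH. vH i x * vH i y) = (if x = y then 1 else 0)"
    using spectral[OF finH lap_sym[OF gH]] by blast
  obtain cs c where cs: "\<forall>C\<in>set cs. is_copy VH mH VG mG C" and cpos: "0 < c"
    and cov: "\<forall>v\<in>VG. length (filter (\<lambda>C. v \<in> fst C) cs) = c"
    using ft unfolding frac_tiles_def by blast
  define N where "N = length cs"
  define W where "W = (\<lambda>l. fst (cs ! l))"
  define e where "e = (\<lambda>l. snd (cs ! l))"
  define \<phi> where "\<phi> = (\<lambda>l. SOME \<phi>. bij_betw \<phi> VH (W l) \<and> (\<forall>x\<in>VH. \<forall>y\<in>VH. e l (\<phi> x) (\<phi> y) = mH x y))"
  have copy: "W l \<subseteq> VG \<and> (\<forall>x y. e l x y \<le> mG x y) \<and> (\<forall>x y. 0 < e l x y \<longrightarrow> x \<in> W l \<and> y \<in> W l)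
      \<and> mg_iso VH mH (W l) (e l)" if l: "l < N" for l
  proof -
    have "is_copy VH mH VG mG (cs ! l)" using cs l unfolding N_def by simp
    then show ?thesis unfolding is_copy_def W_def e_def by (simp add: case_prod_beta)
  qed
  have phi: "bij_betw (\<phi> l) VH (W l) \<and> (\<forall>x\<in>VH. \<forall>y\<in>VH. e l (\<phi> l x) (\<phi> l y) = mH x y)" if l: "l < N" for l
  proof -
    have "\<exists>\<phi>. bij_betw \<phi> VH (W l) \<and> (\<forall>x\<in>VH. \<forall>y\<in>VH. e l (\<phi> x) (\<phi> y) = mH x y)"
      using copy[OF l] unfolding mg_iso_def by blast
    then show ?thesis unfolding \<phi>_def by (rule someI_ex)
  qed
  have T6: "\<forall>x\<in>VG. card {l. l < N \<and> x \<in> W l} = c"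
    using cov unfolding N_def W_def by (simp add: length_filter_conv_card)
  interpret ts: tsetup VG mG VH mH N W e \<phi> c uG lamG vH nuH
  proof
    show "\<forall>l<N. W l \<subseteq> VG" using copy by blast
    show "\<forall>l<N. \<forall>x y. e l x y \<le> mG x y" using copy by blast
    show "\<forall>l<N. \<forall>x y. 0 < e l x y \<longrightarrow> x \<in> W l \<and> y \<in> W l" using copy by blast
    show "\<forall>l<N. bij_betw (\<phi> l) VH (W l)" using phi by blast
    show "\<forall>l<N. \<forall>y\<in>VH. \<forall>y'\<in>VH. e l (\<phi> l y) (\<phi> l y') = mH y y'" using phi by blast
  qed (use gG gH T6 cpos onG egG compG onH egH compH in auto)
  define trG where "trG = (\<Sum>x\<in>VG. heat_kernel VG mG t x)"
  define trH where "trH = (\<Sum>x\<in>VH. heat_kernel VH mH t x)"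
  have trG': "trG = (\<Sum>j<card VG. exp (- t * lamG j))" unfolding trG_def by (rule trace_heat[OF gG onG egG compG])
  have trH': "trH = (\<Sum>k<card VH. exp (- t * nuH k))" unfolding trH_def by (rule trace_heat[OF gH onH egH compH])
  have le: "trG \<le> (\<Sum>j<card VG. ts.RR t j)" unfolding trG' using ts.per_j(1)[OF _ t] by (intro sum_mono) simp
  have sR: "(\<Sum>j<card VG. ts.RR t j) = real N / real c * trH" unfolding trH' by (rule ts.sumR)
  have cards: "real N * real (card VH) = real c * real (card VG)"
    using ts.dc[of "\<lambda>_. 1"] by simp
  have nG0: "0 < real (card VG)" using finG neG by (simp add: card_gt_0_iff)
  have nH0: "0 < real (card VH)" using finH neH by (simp add: card_gt_0_iff)
  have c0: "0 < real c" using cpos by simp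
  have key: "real N / real c * trH / real (card VG) = trH / real (card VH)"
  proof -
    have "real N / real c / real (card VG) = 1 / real (card VH)"
      using cards nG0 nH0 c0 by (simp add: field_simps)
    then have "trH * (real N / real c / real (card VG)) = trH * (1 / real (card VH))" by simp
    then show ?thesis by (simp add: field_simps)
  qed
  have ineq: "trG / real (card VG) \<le> trH / real (card VH)"
  proof -
    have "trG / real (card VG) \<le> (real N / real c * trH) / real (card VG)"
      using le sR nG0 by (intro divide_right_mono) auto
    then show ?thesis using key by simp
  qed
  have eqiff: "trG / real (card VG) = trH / real (card VH) \<longleftrightarrow> mg_iso VH mH VG mG"
  proof
    assume eq: "trG / real (card VG) = trH / real (card VH)"
    then have "trG / real (card VG) = (real N / real c * trH) / real (card VG)" using key by simp
    then have "trG = real N / real c * trH" using nG0 by (simp add: field_simps)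
    then have "(\<Sum>j<card VG. exp (- t * lamG j)) = (\<Sum>j<card VG. ts.RR t j)" using trG' sR by simp
    then have all: "\<forall>j<card VG. exp (- t * lamG j) = ts.RR t j" by (rule ts.eq_all[OF t])
    have hyp: "\<forall>l<N. \<forall>j<card VG. \<forall>k<card VH. ts.aa l j k \<noteq> 0 \<longrightarrow> nuH k = lamG j"
      using ts.per_j(2)[OF _ t] all by blast
    obtain x where x: "x \<in> VG" using neG by blast
    have "card {l. l < N \<and> x \<in> W l} = c" using T6 x by blast
    then have "{l. l < N \<and> x \<in> W l} \<noteq> {}" using cpos by (metis card.empty less_irrefl)
    then have N0: "0 < N" by auto
    show "mg_iso VH mH VG mG" using ts.full[OF N0] hyp N0 conn by blast
  next
    assume "mg_iso VH mH VG mG"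
    then obtain \<psi> where bij: "bij_betw \<psi> VH VG" and em: "\<forall>x\<in>VH. \<forall>y\<in>VH. mG (\<psi> x) (\<psi> y) = mH x y"
      unfolding mg_iso_def by blast
    have "trG = (\<Sum>y\<in>VH. heat_kernel VG mG t (\<psi> y))" unfolding trG_def
      by (rule sum.reindex_bij_betw[OF bij, symmetric])
    also have "\<dots> = trH" unfolding trH_def using heat_iso[OF bij em] by (intro sum.cong refl) simp
    finally have "trG = trH" .
    moreover have "card VG = card VH" using bij_betw_same_card[OF bij] by simp
    ultimately show "trG / real (card VG) = trH / real (card VH)" by simp
  qed
  show ?thesis using ineq eqiff unfolding trG_def trH_def by blast
qed



end
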